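(* Let $d>1$, let $E,F$ be complex elliptic curves, let $P\in E[d]$ and $Q\in F[d]$ be points of order exactly $d$, let $A=(E\times F)/\langle (P,Q)\rangle$ with quotient map $\mu$, and let $H$ be the polarisation on $A$ with $\mu^*H=\mathcal O_E(d\cdot 0)\boxtimes\mathcal O_F(d\cdot 0)$ (a polarisation of type $(1,d)$), with polarisation isogeny $\phi_H:A\to\hat A$. Identify $E$ with $\mu(E\times\{0\})$, $F$ with $\mu(\{0\}\times F)$, $P$ with $\mu(P,0)$ and $Q$ with $\mu(0,Q)$. Then $Q=-P$ in $A$, $E\cap F=\langle P\rangle\subseteq\ker\phi_H$, and $E\cap\ker\phi_H=F\cap\ker\phi_H=\langle P\rangle$. *)

theory Defs
  imports Complex_Main
begin

text \<open>Analytic (Appel-Humbert) model of complex elliptic curves and complex tori.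
A complex elliptic curve is C/Lambda with Lambda = Z w1 + Z w2, w1, w2 R-linearly
independent.  Points of the abelian surface A = (E x F)/<(P,Q)> = C^2/L are
cosets of the lattice L in C^2 (represented as complex x complex).\<close>

definition lattice :: "complex \<Rightarrow> complex \<Rightarrow> complex set" where
  "lattice w1 w2 = {of_int m * w1 + of_int n * w2 | m n. True}"

definition lattice_basis :: "complex \<Rightarrow> complex \<Rightarrow> bool" where
  "lattice_basis w1 w2 \<longleftrightarrow> Im (cnj w1 * w2) \<noteq> 0"

definition has_order :: "complex set \<Rightarrow> complex \<Rightarrow> nat \<Rightarrow> bool" where
  "has_order Lam p d \<longleftrightarrow> (\<forall>k::int. of_int k * p \<in> Lam \<longleftrightarrow> int d dvd k)"

text \<open>Lattice of A = (C/LE x C/LF)/<(p,q)>: LE x LF + Z (p,q).\<close>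
definition quot_lattice ::
  "complex set \<Rightarrow> complex set \<Rightarrow> complex \<Rightarrow> complex \<Rightarrow> (complex \<times> complex) set" where
  "quot_lattice LE LF p q =
     {(x + of_int k * p, y + of_int k * q) | x y k. x \<in> LE \<and> y \<in> LF}"

definition tclass :: "(complex \<times> complex) set \<Rightarrow> complex \<times> complex \<Rightarrow> (complex \<times> complex) set" where
  "tclass L v = {(fst v + fst l, snd v + snd l) | l. l \<in> L}"

definition covol :: "complex \<Rightarrow> complex \<Rightarrow> real" where
  "covol w1 w2 = \<bar>Im (cnj w1 * w2)\<bar>"

text \<open>Hermitian form on C^2 (first Chern class) of O_E(d.0) boxtimes O_F(d.0);
the Hermitian form of O_E(0) on C/(Z w1 + Z w2) is z * cnj w / covol w1 w2.\<close>
definition box_form ::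
  "nat \<Rightarrow> complex \<Rightarrow> complex \<Rightarrow> complex \<Rightarrow> complex \<Rightarrow>
     complex \<times> complex \<Rightarrow> complex \<times> complex \<Rightarrow> complex" where
  "box_form d w1 w2 e1 e2 v w =
     of_nat d * fst v * cnj (fst w) / of_real (covol w1 w2)
   + of_nat d * snd v * cnj (snd w) / of_real (covol e1 e2)"

text \<open>Kernel of phi_H : C^2/L \<rightarrow> dual, K(H) = Lambda(H)/L where
Lambda(H) = {v. Im H(v, L) \<subseteq> Z}.\<close>
definition pol_kernel ::
  "(complex \<times> complex) set \<Rightarrow> (complex \<times> complex \<Rightarrow> complex \<times> complex \<Rightarrow> complex)
     \<Rightarrow> (complex \<times> complex) set set" where
  "pol_kernel L H = {tclass L v | v. \<forall>l\<in>L. Im (H v l) \<in> \<int>}"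

definition E_image :: "(complex \<times> complex) set \<Rightarrow> (complex \<times> complex) set set" where
  "E_image L = {tclass L (z, 0) | z. True}"

definition F_image :: "(complex \<times> complex) set \<Rightarrow> (complex \<times> complex) set set" where
  "F_image L = {tclass L (0, z) | z. True}"

definition cyclic_sub :: "(complex \<times> complex) set \<Rightarrow> complex \<Rightarrow> (complex \<times> complex) set set" where
  "cyclic_sub L p = {tclass L (of_int k * p, 0) | k. True}"

end

theory Submission
  imports Defs
begin


definition cr :: "complex \<Rightarrow> complex \<Rightarrow> real" where
  "cr u v = Im u * Re v - Re u * Im v"

lemma Im_mult_cnj: "Im (u * cnj v) = cr u v"
  by (simp add: cr_def)

lemma ints_abs: "(D::real) \<noteq> 0 \<Longrightarrow> (r / \<bar>D\<bar> \<in> \<int>) = (r / D \<in> \<int>)"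
proof (cases "D > 0")
  case False
  assume "D \<noteq> 0"
  then have "\<bar>D\<bar> = - D" using False by simp
  then show ?thesis by (simp add: divide_minus_right del: minus_in_Ints_iff) (metis minus_in_Ints_iff)
qed simp

lemma lat_mem: "u \<in> lattice w1 w2 \<longleftrightarrow> (\<exists>m n::int. u = of_int m * w1 + of_int n * w2)"
  by (auto simp: lattice_def)

lemma lat_add: "u \<in> lattice w1 w2 \<Longrightarrow> v \<in> lattice w1 w2 \<Longrightarrow> u + v \<in> lattice w1 w2"
  unfolding lat_mem
proof (elim exE)
  fix m n m' n' :: int
  assume "u = of_int m * w1 + of_int n * w2" "v = of_int m' * w1 + of_int n' * w2"
  then have "u + v = of_int (m+m') * w1 + of_int (n+n') * w2" by (simp add: algebra_simps)
  then show "\<exists>m n::int. u + v = of_int m * w1 + of_int n * w2" by blast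
qed

lemma lat_neg: "u \<in> lattice w1 w2 \<Longrightarrow> - u \<in> lattice w1 w2"
  unfolding lat_mem
proof (elim exE)
  fix m n :: int
  assume "u = of_int m * w1 + of_int n * w2"
  then have "- u = of_int (-m) * w1 + of_int (-n) * w2" by (simp add: algebra_simps)
  then show "\<exists>m n::int. - u = of_int m * w1 + of_int n * w2" by blast
qed

lemma lat_zero: "0 \<in> lattice w1 w2"
  unfolding lat_mem by (rule exI[of _ 0], rule exI[of _ 0]) simp

lemma lat_w1: "w1 \<in> lattice w1 w2"
  unfolding lat_mem by (rule exI[of _ 1], rule exI[of _ 0]) simp

lemma lat_w2: "w2 \<in> lattice w1 w2"
  unfolding lat_mem by (rule exI[of _ 0], rule exI[of _ 1]) simp

lemma cr_lat:
  assumes "lattice_basis w1 w2" "u \<in> lattice w1 w2" "v \<in> lattice w1 w2"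
  shows "cr u v / covol w1 w2 \<in> \<int>"
proof -
  let ?D = "Im (cnj w1 * w2)"
  have D: "?D \<noteq> 0" using assms(1) by (simp add: lattice_basis_def)
  obtain m n m' n' :: int where u: "u = of_int m * w1 + of_int n * w2"
    and v: "v = of_int m' * w1 + of_int n' * w2" using assms(2,3) unfolding lat_mem by blast
  have "cr u v = - of_int (m * n' - n * m') * ?D"
    unfolding u v cr_def by (simp add: algebra_simps)
  then have "cr u v / ?D = of_int (- (m * n' - n * m'))" using D by simp
  then have "cr u v / ?D \<in> \<int>" by simp
  then show ?thesis unfolding covol_def using ints_abs[OF D] by simp
qed

lemma order_mem: "has_order L p d \<Longrightarrow> of_nat d * p \<in> L"
  unfolding has_order_def by (metis dvd_refl of_int_of_nat_eq)

lemma curve_int: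
  assumes "lattice_basis w1 w2" "has_order (lattice w1 w2) p d"
    "x \<in> lattice w1 w2" "x' \<in> lattice w1 w2"
  shows "of_nat d * cr (x + of_int k * p) (x' + of_int j * p) / covol w1 w2 \<in> \<int>"
proof -
  let ?c = "covol w1 w2"
  have dp: "of_nat d * p \<in> lattice w1 w2" using order_mem[OF assms(2)] .
  have eq: "of_nat d * cr (x + of_int k * p) (x' + of_int j * p)
     = of_nat d * cr x x' + of_int j * cr x (of_nat d * p) + of_int k * cr (of_nat d * p) x'"
    by (simp add: cr_def algebra_simps)
  have "of_nat d * cr (x + of_int k * p) (x' + of_int j * p) / ?c
     = of_nat d * (cr x x' / ?c) + of_int j * (cr x (of_nat d * p) / ?c) + of_int k * (cr (of_nat d * p) x' / ?c)"
    unfolding eq by (simp add: add_divide_distrib)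
  also have "\<dots> \<in> \<int>"
    using cr_lat[OF assms(1) assms(3,4)] cr_lat[OF assms(1) assms(3) dp] cr_lat[OF assms(1) dp assms(4)]
    by (intro Ints_add Ints_mult) auto
  finally show ?thesis .
qed

lemma dz_lem: assumes D: "D \<noteq> 0" and Dexp: "D = Re w1 * Im w2 - Im w1 * Re w2"
 and s: "real_of_int s * D = - (real d * cr z w2)" and t: "real_of_int t * D = real d * cr z w1"
 shows "of_nat d * z = of_int s * w1 + of_int t * w2"
proof -
  have "D * (real d * Re z) = D * (real_of_int s * Re w1 + real_of_int t * Re w2)"
  proof -
    have "D * (real_of_int s * Re w1 + real_of_int t * Re w2) = (real_of_int s * D) * Re w1 + (real_of_int t * D) * Re w2"
      by (simp add: algebra_simps)
    also have "\<dots> = D * (real d * Re z)" unfolding s t by (simp add: cr_def Dexp algebra_simps)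
    finally show ?thesis by (rule sym)
  qed
  then have re: "real d * Re z = real_of_int s * Re w1 + real_of_int t * Re w2" using D by simp
  have "D * (real d * Im z) = D * (real_of_int s * Im w1 + real_of_int t * Im w2)"
  proof -
    have "D * (real_of_int s * Im w1 + real_of_int t * Im w2) = (real_of_int s * D) * Im w1 + (real_of_int t * D) * Im w2"
      by (simp add: algebra_simps)
    also have "\<dots> = D * (real d * Im z)" unfolding s t by (simp add: cr_def Dexp algebra_simps)
    finally show ?thesis by (rule sym)
  qed
  then have im: "real d * Im z = real_of_int s * Im w1 + real_of_int t * Im w2" using D by simp
  show ?thesis unfolding complex_eq_iff using re im by simp
qed
lemma curve_ker:
  assumes basis: "lattice_basis w1 w2" and ord: "has_order (lattice w1 w2) p d" and d1: "d > 1"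
    and hyp: "\<forall>x\<in>lattice w1 w2. \<forall>j::int. of_nat d * cr z (x + of_int j * p) / covol w1 w2 \<in> \<int>"
  shows "\<exists>k::int. z - of_int k * p \<in> lattice w1 w2"
proof -
  define D where "D = Im (cnj w1 * w2)"
  have D: "D \<noteq> 0" using basis by (simp add: lattice_basis_def D_def)
  have cD: "covol w1 w2 = \<bar>D\<bar>" by (simp add: covol_def D_def)
  have hyp': "of_nat d * cr z (x + of_int j * p) / D \<in> \<int>" if "x \<in> lattice w1 w2" for x j
    using hyp that ints_abs[OF D] cD by auto
  obtain a b :: int where ab: "of_nat d * p = of_int a * w1 + of_int b * w2"
    using order_mem[OF ord] unfolding lat_mem by blast
  define g where "g = gcd (gcd a b) (int d)"
  have gpos: "g > 0" using d1 by (simp add: g_def)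
  have g1: "g = 1"
  proof -
    obtain a' where a': "a = g * a'" unfolding g_def by (meson dvd_def gcd_dvd1 dvd_trans)
    obtain b' where b': "b = g * b'" unfolding g_def by (meson dvd_def gcd_dvd2 gcd_dvd1 dvd_trans)
    obtain d' where d': "int d = g * d'" unfolding g_def by (meson dvd_def gcd_dvd2)
    have "of_int g * (of_int d' * p) = of_int g * (of_int a' * w1 + of_int b' * w2)"
    proof -
      have "of_int g * (of_int d' * p) = of_int (int d) * p" by (simp add: d')
      also have "\<dots> = of_int a * w1 + of_int b * w2" using ab by simp
      finally show ?thesis by (simp add: a' b' algebra_simps)
    qed
    then have "of_int d' * p = of_int a' * w1 + of_int b' * w2" using gpos by simp
    then have "of_int d' * p \<in> lattice w1 w2" unfolding lat_mem by blast
    then have "int d dvd d'" using ord unfolding has_order_def by blast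
    moreover have "d' > 0"
    proof -
      have "0 < g * d'" using d' d1 by simp
      then show ?thesis using gpos zero_less_mult_pos by blast
    qed
    ultimately have "int d \<le> d'" by (simp add: zdvd_imp_le)
    then have "g * d' \<le> 1 * d'" using d' by simp
    then have "g \<le> 1" using \<open>d' > 0\<close> by (simp add: mult_le_cancel_right)
    then show ?thesis using gpos by simp
  qed
  obtain u v where uv: "u * a + v * b = gcd a b" using bezout_int by blast
  obtain u' w where uw: "u' * gcd a b + w * int d = g" unfolding g_def using bezout_int by blast
  define U where "U = u' * u"
  define V where "V = u' * v"
  have "U * a + V * b = u' * (u * a + v * b)" by (simp add: U_def V_def algebra_simps)
  then have UV: "U * a + V * b + w * int d = 1" using uv uw g1 by simp
  have "of_nat d * cr z (w1 + of_int 0 * p) / D \<in> \<int>" by (rule hyp'[OF lat_w1])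
  then have "of_nat d * cr z w1 / D \<in> \<int>" by simp
  then obtain t :: int where t: "of_nat d * cr z w1 / D = of_int t" by (rule Ints_cases)
  have "of_nat d * cr z (w2 + of_int 0 * p) / D \<in> \<int>" by (rule hyp'[OF lat_w2])
  then have "- (of_nat d * cr z w2 / D) \<in> \<int>" by simp
  then obtain s :: int where s: "- (of_nat d * cr z w2 / D) = of_int s" by (rule Ints_cases)
  have "of_nat d * cr z (0 + of_int 1 * p) / D \<in> \<int>" by (rule hyp'[OF lat_zero])
  then have "of_nat d * cr z p / D \<in> \<int>" by simp
  then obtain m :: int where m: "of_nat d * cr z p / D = of_int m" by (rule Ints_cases)
  have Dexp: "D = Re w1 * Im w2 - Im w1 * Re w2" by (simp add: D_def)
  have dz: "of_nat d * z = of_int s * w1 + of_int t * w2"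
  proof (rule dz_lem[OF D Dexp])
    show "real_of_int s * D = - (real d * cr z w2)" using s D by (simp add: field_simps)
    show "real_of_int t * D = real d * cr z w1" using t D by (simp add: field_simps)
  qed
  have "of_nat d * of_nat d * cr z p = cr (of_nat d * z) (of_nat d * p)"
    by (simp add: cr_def algebra_simps)
  also have "\<dots> = - of_int (s * b - t * a) * D"
    unfolding dz ab Dexp cr_def by (simp add: algebra_simps)
  finally have "of_nat d * (of_nat d * cr z p / D) = - of_int (s * b - t * a)"
    using D by (simp add: field_simps)
  then have "of_nat d * of_int m = (- of_int (s * b - t * a) :: real)" using m by simp
  then have "real_of_int (int d * m) = real_of_int (- (s * b - t * a))" by simp
  then have sbta: "s * b - t * a = - (int d * m)" by linarith
  define k where "k = U * s + V * t"
  define M where "M = s * w - V * m"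
  define N where "N = U * m + t * w"
  have e1: "s - k * a = int d * M"
  proof -
    have "s - k * a = s * (U * a + V * b + w * int d) - k * a" using UV by simp
    also have "\<dots> = V * (s * b - t * a) + s * w * int d" by (simp add: k_def algebra_simps)
    also have "\<dots> = int d * M" unfolding sbta M_def by (simp add: algebra_simps)
    finally show ?thesis .
  qed
  have e2: "t - k * b = int d * N"
  proof -
    have "t - k * b = t * (U * a + V * b + w * int d) - k * b" using UV by simp
    also have "\<dots> = - U * (s * b - t * a) + t * w * int d" by (simp add: k_def algebra_simps)
    also have "\<dots> = int d * N" unfolding sbta N_def by (simp add: algebra_simps)
    finally show ?thesis .
  qed
  have "of_nat d * (z - of_int k * p) = of_int (s - k * a) * w1 + of_int (t - k * b) * w2"
  proof -
    have "of_nat d * (z - of_int k * p) = of_nat d * z - of_int k * (of_nat d * p)"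
      by (simp add: algebra_simps)
    also have "\<dots> = of_int (s - k * a) * w1 + of_int (t - k * b) * w2"
      unfolding dz ab by (simp add: algebra_simps)
    finally show ?thesis .
  qed
  also have "\<dots> = of_nat d * (of_int M * w1 + of_int N * w2)"
    unfolding e1 e2 by (simp add: algebra_simps)
  finally have "z - of_int k * p = of_int M * w1 + of_int N * w2" using d1 by simp
  then show ?thesis unfolding lat_mem by blast
qed



lemma Im_box: "Im (box_form d w1 w2 e1 e2 v w) =
   real d * cr (fst v) (fst w) / covol w1 w2 + real d * cr (snd v) (snd w) / covol e1 e2"
  by (simp add: box_form_def cr_def algebra_simps)

lemma cr_add1: "cr (a + b) c = cr a c + cr b c" by (simp add: cr_def algebra_simps)
lemma cr_zero1[simp]: "cr 0 c = 0" by (simp add: cr_def)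

lemma tclass_eq:
  assumes z: "(0,0) \<in> L"
    and add: "\<And>a b. a\<in>L \<Longrightarrow> b\<in>L \<Longrightarrow> (fst a + fst b, snd a + snd b) \<in> L"
    and neg: "\<And>a. a\<in>L \<Longrightarrow> (- fst a, - snd a) \<in> L"
  shows "tclass L u = tclass L v \<longleftrightarrow> (fst u - fst v, snd u - snd v) \<in> L"
proof
  assume eq: "tclass L u = tclass L v"
  have "u \<in> tclass L u" unfolding tclass_def using z by force
  then have "u \<in> tclass L v" using eq by simp
  then obtain l where "l \<in> L" "u = (fst v + fst l, snd v + snd l)" unfolding tclass_def by blast
  then show "(fst u - fst v, snd u - snd v) \<in> L" by simp
next
  assume dl: "(fst u - fst v, snd u - snd v) \<in> L"
  show "tclass L u = tclass L v"
  proof (intro set_eqI iffI)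
    fix X assume "X \<in> tclass L u"
    then obtain l where l: "l \<in> L" "X = (fst u + fst l, snd u + snd l)" unfolding tclass_def by blast
    have "(fst (fst u - fst v, snd u - snd v) + fst l, snd (fst u - fst v, snd u - snd v) + snd l) \<in> L"
      by (rule add[OF dl l(1)])
    then show "X \<in> tclass L v" unfolding tclass_def l(2)
      by (intro CollectI exI[of _ "(fst u - fst v + fst l, snd u - snd v + snd l)"]) auto
  next
    fix X assume "X \<in> tclass L v"
    then obtain l where l: "l \<in> L" "X = (fst v + fst l, snd v + snd l)" unfolding tclass_def by blast
    have "(fst (- fst (fst u - fst v, snd u - snd v), - snd (fst u - fst v, snd u - snd v)) + fst l,
           snd (- fst (fst u - fst v, snd u - snd v), - snd (fst u - fst v, snd u - snd v)) + snd l) \<in> L"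
      by (rule add[OF neg[OF dl] l(1)])
    then show "X \<in> tclass L u" unfolding tclass_def l(2)
      by (intro CollectI exI[of _ "(fst v - fst u + fst l, snd v - snd u + snd l)"]) auto
  qed
qed

lemma ql_mem: "v \<in> quot_lattice LE LF p q \<longleftrightarrow>
  (\<exists>x y k. x \<in> LE \<and> y \<in> LF \<and> v = (x + of_int k * p, y + of_int k * q))"
  by (auto simp: quot_lattice_def)

lemma ql_zero: "(0,0) \<in> quot_lattice (lattice w1 w2) (lattice e1 e2) p q"
  unfolding ql_mem by (rule exI[of _ 0], rule exI[of _ 0], rule exI[of _ 0]) (simp add: lat_zero)

lemma ql_add: "a \<in> quot_lattice (lattice w1 w2) (lattice e1 e2) p q \<Longrightarrow> b \<in> quot_lattice (lattice w1 w2) (lattice e1 e2) p q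
  \<Longrightarrow> (fst a + fst b, snd a + snd b) \<in> quot_lattice (lattice w1 w2) (lattice e1 e2) p q"
  unfolding ql_mem
proof (elim exE conjE)
  fix x y k x' y' k'
  assume h: "x \<in> lattice w1 w2" "y \<in> lattice e1 e2" "a = (x + of_int k * p, y + of_int k * q)"
    "x' \<in> lattice w1 w2" "y' \<in> lattice e1 e2" "b = (x' + of_int k' * p, y' + of_int k' * q)"
  show "\<exists>x y k. x \<in> lattice w1 w2 \<and> y \<in> lattice e1 e2 \<and>
        (fst a + fst b, snd a + snd b) = (x + of_int k * p, y + of_int k * q)"
    by (rule exI[of _ "x + x'"], rule exI[of _ "y + y'"], rule exI[of _ "k + k'"])
       (simp add: h lat_add algebra_simps)
qed

lemma ql_neg: "a \<in> quot_lattice (lattice w1 w2) (lattice e1 e2) p q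
  \<Longrightarrow> (- fst a, - snd a) \<in> quot_lattice (lattice w1 w2) (lattice e1 e2) p q"
  unfolding ql_mem
proof (elim exE conjE)
  fix x y k
  assume h: "x \<in> lattice w1 w2" "y \<in> lattice e1 e2" "a = (x + of_int k * p, y + of_int k * q)"
  show "\<exists>x y k. x \<in> lattice w1 w2 \<and> y \<in> lattice e1 e2 \<and>
        (- fst a, - snd a) = (x + of_int k * p, y + of_int k * q)"
    by (rule exI[of _ "- x"], rule exI[of _ "- y"], rule exI[of _ "- k"])
       (simp add: h lat_neg algebra_simps)
qed



theorem lemma2p4:
  fixes d :: nat and w1 w2 e1 e2 p q :: complex
  assumes "d > 1"
    and "lattice_basis w1 w2" and "lattice_basis e1 e2"
    and "has_order (lattice w1 w2) p d" and "has_order (lattice e1 e2) q d"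
  defines "L \<equiv> quot_lattice (lattice w1 w2) (lattice e1 e2) p q"
    and "H \<equiv> box_form d w1 w2 e1 e2"
  shows "tclass L (0, q) = tclass L (- p, 0)
    \<and> E_image L \<inter> F_image L = cyclic_sub L p
    \<and> cyclic_sub L p \<subseteq> pol_kernel L H
    \<and> E_image L \<inter> pol_kernel L H = cyclic_sub L p
    \<and> F_image L \<inter> pol_kernel L H = cyclic_sub L p"
proof -
  note d1 = assms(1) and bE = assms(2) and bF = assms(3) and oE = assms(4) and oF = assms(5)
  let ?LE = "lattice w1 w2" and ?LF = "lattice e1 e2"
  have teq: "tclass L u = tclass L v \<longleftrightarrow> (fst u - fst v, snd u - snd v) \<in> L" for u v
    unfolding L_def by (rule tclass_eq[OF ql_zero ql_add ql_neg])
  have Lmem: "v \<in> L \<longleftrightarrow> (\<exists>x y k. x \<in> ?LE \<and> y \<in> ?LF \<and> v = (x + of_int k * p, y + of_int k * q))" for v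
    unfolding L_def by (rule ql_mem)
  have ImH: "Im (H v w) = real d * cr (fst v) (fst w) / covol w1 w2 + real d * cr (snd v) (snd w) / covol e1 e2" for v w
    unfolding H_def by (rule Im_box)
  have HLL: "Im (H a b) \<in> \<int>" if ha: "a \<in> L" and hb: "b \<in> L" for a b
  proof -
    obtain x y k where a: "x \<in> ?LE" "y \<in> ?LF" "a = (x + of_int k * p, y + of_int k * q)" using ha Lmem by blast
    obtain x' y' j where b: "x' \<in> ?LE" "y' \<in> ?LF" "b = (x' + of_int j * p, y' + of_int j * q)" using hb Lmem by blast
    show ?thesis unfolding ImH a(3) b(3) fst_conv snd_conv
      by (intro Ints_add curve_int bE bF oE oF a b)
  qed
  define Kc where "Kc v \<longleftrightarrow> (\<forall>l\<in>L. Im (H v l) \<in> \<int>)" for v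
  have ker: "tclass L v \<in> pol_kernel L H \<longleftrightarrow> Kc v" for v
  proof
    assume "tclass L v \<in> pol_kernel L H"
    then obtain v' where v': "tclass L v = tclass L v'" "Kc v'" unfolding pol_kernel_def Kc_def by blast
    have dl: "(fst v - fst v', snd v - snd v') \<in> L" using v'(1) teq by blast
    show "Kc v" unfolding Kc_def
    proof
      fix l assume l: "l \<in> L"
      have "Im (H v l) = Im (H v' l) + Im (H (fst v - fst v', snd v - snd v') l)"
        unfolding ImH by (simp add: cr_def algebra_simps add_divide_distrib diff_divide_distrib)
      then show "Im (H v l) \<in> \<int>" using v'(2) l HLL[OF dl l] unfolding Kc_def by simp
    qed
  next
    assume "Kc v" then show "tclass L v \<in> pol_kernel L H" unfolding pol_kernel_def Kc_def by blast
  qed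
  have Kc_E: "Kc (z, 0) \<longleftrightarrow> (\<forall>x\<in>?LE. \<forall>j::int. of_nat d * cr z (x + of_int j * p) / covol w1 w2 \<in> \<int>)" for z
  proof
    assume h: "Kc (z, 0)"
    show "\<forall>x\<in>?LE. \<forall>j::int. of_nat d * cr z (x + of_int j * p) / covol w1 w2 \<in> \<int>"
    proof (intro ballI allI)
      fix x j assume "x \<in> ?LE"
      then have "(x + of_int j * p, 0 + of_int j * q) \<in> L" unfolding Lmem using lat_zero by blast
      then show "of_nat d * cr z (x + of_int j * p) / covol w1 w2 \<in> \<int>" using h unfolding Kc_def ImH by fastforce
    qed
  next
    assume h: "\<forall>x\<in>?LE. \<forall>j::int. of_nat d * cr z (x + of_int j * p) / covol w1 w2 \<in> \<int>"
    show "Kc (z, 0)" unfolding Kc_def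
    proof
      fix l assume "l \<in> L"
      then obtain x y k where "x \<in> ?LE" "l = (x + of_int k * p, y + of_int k * q)" unfolding Lmem by blast
      then show "Im (H (z, 0) l) \<in> \<int>" using h unfolding ImH by simp
    qed
  qed
  have Kc_F: "Kc (0, z) \<longleftrightarrow> (\<forall>y\<in>?LF. \<forall>j::int. of_nat d * cr z (y + of_int j * q) / covol e1 e2 \<in> \<int>)" for z
  proof
    assume h: "Kc (0, z)"
    show "\<forall>y\<in>?LF. \<forall>j::int. of_nat d * cr z (y + of_int j * q) / covol e1 e2 \<in> \<int>"
    proof (intro ballI allI)
      fix y j assume "y \<in> ?LF"
      then have "(0 + of_int j * p, y + of_int j * q) \<in> L" unfolding Lmem using lat_zero by blast
      then show "of_nat d * cr z (y + of_int j * q) / covol e1 e2 \<in> \<int>" using h unfolding Kc_def ImH by fastforce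
    qed
  next
    assume h: "\<forall>y\<in>?LF. \<forall>j::int. of_nat d * cr z (y + of_int j * q) / covol e1 e2 \<in> \<int>"
    show "Kc (0, z)" unfolding Kc_def
    proof
      fix l assume "l \<in> L"
      then obtain x y k where "y \<in> ?LF" "l = (x + of_int k * p, y + of_int k * q)" unfolding Lmem by blast
      then show "Im (H (0, z) l) \<in> \<int>" using h unfolding ImH by simp
    qed
  qed
  have G1: "tclass L (0, q) = tclass L (- p, 0)"
    unfolding teq Lmem by (rule exI[of _ 0], rule exI[of _ 0], rule exI[of _ 1]) (simp add: lat_zero)
  have cycF: "tclass L (of_int k * p, 0) = tclass L (0, of_int (-k) * q)" for k
    unfolding teq Lmem by (rule exI[of _ 0], rule exI[of _ 0], rule exI[of _ k]) (simp add: lat_zero)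
  have cycE: "z - of_int k * p \<in> ?LE \<Longrightarrow> tclass L (z, 0) = tclass L (of_int k * p, 0)" for z k
    unfolding teq Lmem by (rule exI[of _ "z - of_int k * p"], rule exI[of _ 0], rule exI[of _ 0]) (simp add: lat_zero)
  have cyc_ker: "cyclic_sub L p \<subseteq> pol_kernel L H"
  proof
    fix X assume "X \<in> cyclic_sub L p"
    then obtain k where X: "X = tclass L (of_int k * p, 0)" unfolding cyclic_sub_def by blast
    have "Kc (of_int k * p, 0)" unfolding Kc_E
    proof (intro ballI allI)
      fix x j assume "x \<in> ?LE"
      from curve_int[OF bE oE lat_zero this, of k j]
      show "of_nat d * cr (of_int k * p) (x + of_int j * p) / covol w1 w2 \<in> \<int>" by simp
    qed
    then show "X \<in> pol_kernel L H" using X ker by simp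
  qed
  have cyc_E: "cyclic_sub L p \<subseteq> E_image L" unfolding cyclic_sub_def E_image_def by blast
  have cyc_F: "cyclic_sub L p \<subseteq> F_image L" unfolding cyclic_sub_def F_image_def using cycF by blast
  have G2: "E_image L \<inter> F_image L = cyclic_sub L p"
  proof
    show "E_image L \<inter> F_image L \<subseteq> cyclic_sub L p"
    proof
      fix X assume "X \<in> E_image L \<inter> F_image L"
      then obtain z w where X: "X = tclass L (z, 0)" "X = tclass L (0, w)" unfolding E_image_def F_image_def by blast
      then have "tclass L (z, 0) = tclass L (0, w)" by simp
      then have "(z, - w) \<in> L" using teq[of "(z, 0)" "(0, w)"] by simp
      then obtain x y k where "x \<in> ?LE" "z = x + of_int k * p" unfolding Lmem by auto
      then have "z - of_int k * p \<in> ?LE" by simp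
      then show "X \<in> cyclic_sub L p" using X(1) cycE unfolding cyclic_sub_def by blast
    qed
  qed (use cyc_E cyc_F in blast)
  have G4: "E_image L \<inter> pol_kernel L H = cyclic_sub L p"
  proof
    show "E_image L \<inter> pol_kernel L H \<subseteq> cyclic_sub L p"
    proof
      fix X assume X: "X \<in> E_image L \<inter> pol_kernel L H"
      then obtain z where Xz: "X = tclass L (z, 0)" unfolding E_image_def by blast
      then have "Kc (z, 0)" using X ker by blast
      then obtain k where "z - of_int k * p \<in> ?LE" using curve_ker[OF bE oE d1] Kc_E by blast
      then show "X \<in> cyclic_sub L p" using Xz cycE unfolding cyclic_sub_def by blast
    qed
  qed (use cyc_E cyc_ker in blast)
  have G5: "F_image L \<inter> pol_kernel L H = cyclic_sub L p"
  proof
    show "F_image L \<inter> pol_kernel L H \<subseteq> cyclic_sub L p"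
    proof
      fix X assume X: "X \<in> F_image L \<inter> pol_kernel L H"
      then obtain z where Xz: "X = tclass L (0, z)" unfolding F_image_def by blast
      then have "Kc (0, z)" using X ker by blast
      then obtain k where zk: "z - of_int k * q \<in> ?LF" using curve_ker[OF bF oF d1] Kc_F by blast
      have "tclass L (0, z) = tclass L (of_int (-k) * p, 0)"
        unfolding teq Lmem by (rule exI[of _ 0], rule exI[of _ "z - of_int k * q"], rule exI[of _ k])
          (simp add: lat_zero zk)
      then show "X \<in> cyclic_sub L p" using Xz unfolding cyclic_sub_def by blast
    qed
  qed (use cyc_F cyc_ker in blast)
  show ?thesis using G1 G2 cyc_ker G4 G5 by blast
qed

end
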